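(* For every set $\Gamma\subseteq\mathcal{L}(\boxdot)$ and every $\phi\in\mathcal{L}(\boxdot)$, the following are equivalent: (a) $\Gamma\vdash_{{\bf K4^\boxdot}}\phi$; (b) $\Gamma\vDash_{qt}\phi$; (c) $\Gamma\vDash_{pt}\phi$.
   Context: Fix a nonempty set $\mathbf{P}$ of propositional variables. A bimodal model is $\langle S,R_1,R_2,V\rangle$ with $S$ nonempty, $R_1,R_2\subseteq S\times S$, $V:\mathbf{P}\to\mathcal{P}(S)$. $\mathcal{L}(\boxdot):\ \phi::=p\mid\neg\phi\mid(\phi\wedge\phi)\mid\boxdot\phi$. Truth: $\mathcal{M},s\vDash\boxdot\phi$ iff for all $t,u$ with $sR_1t$ and $sR_2u$, ($\mathcal{M},t\vDash\phi\iff\mathcal{M},u\vDash\phi$); atoms and Booleans as usual. ${\bf K^\boxdot}$ has axioms: all instances of propositional tautologies; $\boxdot\top$; $\boxdot\phi\leftrightarrow\boxdot\neg\phi$; $\boxdot\phi\wedge\boxdot\psi\to\boxdot(\phi\wedge\psi)$; $\boxdot\phi\to\boxdot(\phi\vee\psi)\vee\boxdot(\neg\phi\vee\chi)$; rules: modus ponens and RE: from $\phi\leftrightarrow\psi$ infer $\boxdot\phi\leftrightarrow\boxdot\psi$. ${\bf K4^\boxdot}$ is ${\bf K^\boxdot}$ plus the axiom schema $\boxdot\phi\to\boxdot(\boxdot\phi\vee\psi)$. A bimodal frame/model is $qt$ (quasi-transitive) if for all $i,j\in\{1,2\}$ and all $x,y,z$: $xR_iy\wedge yR_jz\to xR_jz$;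 it is $pt$ (pseudo-transitive) if for all $i,j\in\{1,2\}$ and all $x,y,z$: $xR_iy\wedge yR_jz\to xR_1z\wedge xR_2z$. $\Gamma\vDash_{qt}\phi$ means: for every $qt$-model $\mathcal{M}$ and state $s$, if all of $\Gamma$ is true at $s$ then $\phi$ is true at $s$; similarly $\vDash_{pt}$. $\Gamma\vdash\phi$ means some finite conjunction of members of $\Gamma$ provably implies $\phi$. *)

theory Defs
  imports Main
begin

datatype 'p fm = Atom 'p | Neg "'p fm" | And "'p fm" "'p fm" | Bdot "'p fm"

definition Or :: "'p fm \<Rightarrow> 'p fm \<Rightarrow> 'p fm" where
  "Or a b = Neg (And (Neg a) (Neg b))"
definition Imp :: "'p fm \<Rightarrow> 'p fm \<Rightarrow> 'p fm" where
  "Imp a b = Neg (And a (Neg b))"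
definition Iff :: "'p fm \<Rightarrow> 'p fm \<Rightarrow> 'p fm" where
  "Iff a b = And (Imp a b) (Imp b a)"
definition Top :: "'p fm" where
  "Top = Neg (And (Atom undefined) (Neg (Atom undefined)))"

fun peval :: "('p fm \<Rightarrow> bool) \<Rightarrow> 'p fm \<Rightarrow> bool" where
  "peval g (Atom p) = g (Atom p)"
| "peval g (Neg a) = (\<not> peval g a)"
| "peval g (And a b) = (peval g a \<and> peval g b)"
| "peval g (Bdot a) = g (Bdot a)"

definition tautology :: "'p fm \<Rightarrow> bool" where
  "tautology a \<longleftrightarrow> (\<forall>g. peval g a)"

inductive K4thm :: "'p fm \<Rightarrow> bool" where
  Taut: "tautology a \<Longrightarrow> K4thm a"
| BTop: "K4thm (Bdot Top)"
| BNeg: "K4thm (Iff (Bdot a) (Bdot (Neg a)))"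
| BAnd: "K4thm (Imp (And (Bdot a) (Bdot b)) (Bdot (And a b)))"
| BSplit: "K4thm (Imp (Bdot a) (Or (Bdot (Or a b)) (Bdot (Or (Neg a) c))))"
| B4: "K4thm (Imp (Bdot a) (Bdot (Or (Bdot a) b)))"
| MP: "K4thm (Imp a b) \<Longrightarrow> K4thm a \<Longrightarrow> K4thm b"
| RE: "K4thm (Iff a b) \<Longrightarrow> K4thm (Iff (Bdot a) (Bdot b))"

definition conj_list :: "'p fm list \<Rightarrow> 'p fm" where
  "conj_list L = foldr And L Top"

definition K4_derives :: "'p fm set \<Rightarrow> 'p fm \<Rightarrow> bool" where
  "K4_derives \<Gamma> a \<longleftrightarrow> (\<exists>L. set L \<subseteq> \<Gamma> \<and> K4thm (Imp (conj_list L) a))"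

type_synonym ('s,'p) model = "'s set \<times> ('s \<times> 's) set \<times> ('s \<times> 's) set \<times> ('p \<Rightarrow> 's set)"

definition is_model :: "('s,'p) model \<Rightarrow> bool" where
  "is_model M \<longleftrightarrow> (case M of (S, R1, R2, V) \<Rightarrow>
     S \<noteq> {} \<and> R1 \<subseteq> S \<times> S \<and> R2 \<subseteq> S \<times> S \<and> (\<forall>p. V p \<subseteq> S))"

fun sat :: "('s,'p) model \<Rightarrow> 's \<Rightarrow> 'p fm \<Rightarrow> bool" where
  "sat (S, R1, R2, V) s (Atom p) = (s \<in> V p)"
| "sat M s (Neg a) = (\<not> sat M s a)"
| "sat M s (And a b) = (sat M s a \<and> sat M s b)"
| "sat (S, R1, R2, V) s (Bdot a) =
     (\<forall>t u. (s, t) \<in> R1 \<and> (s, u) \<in> R2 \<longrightarrow> (sat (S, R1, R2, V) t a \<longleftrightarrow> sat (S, R1, R2, V) u a))"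

definition rel :: "('s,'p) model \<Rightarrow> nat \<Rightarrow> ('s \<times> 's) set" where
  "rel M i = (case M of (S, R1, R2, V) \<Rightarrow> if i = 1 then R1 else R2)"

definition qt :: "('s,'p) model \<Rightarrow> bool" where
  "qt M \<longleftrightarrow> (\<forall>i\<in>{1,2}. \<forall>j\<in>{1,2}. \<forall>x y z.
      (x, y) \<in> rel M i \<and> (y, z) \<in> rel M j \<longrightarrow> (x, z) \<in> rel M j)"

definition pt :: "('s,'p) model \<Rightarrow> bool" where
  "pt M \<longleftrightarrow> (\<forall>i\<in>{1,2}. \<forall>j\<in>{1,2}. \<forall>x y z.
      (x, y) \<in> rel M i \<and> (y, z) \<in> rel M j \<longrightarrow> (x, z) \<in> rel M 1 \<and> (x, z) \<in> rel M 2)"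

definition conseq :: "'s itself \<Rightarrow> (('s,'p) model \<Rightarrow> bool) \<Rightarrow> 'p fm set \<Rightarrow> 'p fm \<Rightarrow> bool" where
  "conseq _ C \<Gamma> a \<longleftrightarrow> (\<forall>M s. is_model M \<and> C M \<and> s \<in> fst M \<and> (\<forall>g\<in>\<Gamma>. sat M s g) \<longrightarrow> sat M s a)"

abbreviation qt_conseq :: "'s itself \<Rightarrow> 'p fm set \<Rightarrow> 'p fm \<Rightarrow> bool" where
  "qt_conseq T \<equiv> conseq T qt"
abbreviation pt_conseq :: "'s itself \<Rightarrow> 'p fm set \<Rightarrow> 'p fm \<Rightarrow> bool" where
  "pt_conseq T \<equiv> conseq T pt"

end

theory Submission
  imports Defs
begin

lemma peval_Or[simp]: "peval g (Or a b) = (peval g a \<or> peval g b)" by (simp add: Or_def)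
lemma peval_Imp[simp]: "peval g (Imp a b) = (peval g a \<longrightarrow> peval g b)" by (simp add: Imp_def)
lemma peval_Iff[simp]: "peval g (Iff a b) = (peval g a \<longleftrightarrow> peval g b)" by (auto simp add: Iff_def)
lemma peval_Top[simp]: "peval g Top" by (simp add: Top_def)
lemma peval_conj[simp]: "peval g (conj_list L) = (\<forall>x\<in>set L. peval g x)"
  by (induction L) (auto simp: conj_list_def)

lemma taut_thm: "(\<And>g. peval g a) \<Longrightarrow> K4thm a"
  by (rule Taut) (simp add: tautology_def)

lemma taut_mp: "K4thm a \<Longrightarrow> (\<And>g. peval g a \<Longrightarrow> peval g b) \<Longrightarrow> K4thm b"
proof -
  assume a: "K4thm a" and h: "\<And>g. peval g a \<Longrightarrow> peval g b"
  have "K4thm (Imp a b)" by (rule taut_thm) (simp add: h)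
  from MP[OF this a] show ?thesis .
qed

lemma taut_mp2: "K4thm a \<Longrightarrow> K4thm b \<Longrightarrow> (\<And>g. peval g a \<Longrightarrow> peval g b \<Longrightarrow> peval g c) \<Longrightarrow> K4thm c"
proof -
  assume a: "K4thm a" and b: "K4thm b" and h: "\<And>g. peval g a \<Longrightarrow> peval g b \<Longrightarrow> peval g c"
  have "K4thm (Imp a (Imp b c))" by (rule taut_thm) (simp add: h)
  from MP[OF MP[OF this a] b] show ?thesis .
qed

section \<open>Soundness\<close>

lemma sat_peval: "sat M s a = peval (\<lambda>f. sat M s f) a"
  by (induction a) auto

lemma sat_Imp[simp]: "sat M s (Imp a b) = (sat M s a \<longrightarrow> sat M s b)" by (simp add: Imp_def)
lemma sat_Or[simp]: "sat M s (Or a b) = (sat M s a \<or> sat M s b)" by (simp add: Or_def)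
lemma sat_Iff[simp]: "sat M s (Iff a b) = (sat M s a \<longleftrightarrow> sat M s b)" by (auto simp add: Iff_def)
lemma sat_Top[simp]: "sat M s Top" by (simp add: Top_def)
lemma sat_conj: "sat M s (conj_list L) = (\<forall>x\<in>set L. sat M s x)"
  by (induction L) (auto simp: conj_list_def)

lemma qtD: "qt M \<Longrightarrow> i\<in>{1,2} \<Longrightarrow> j\<in>{1,2} \<Longrightarrow> (x,y)\<in>rel M i \<Longrightarrow> (y,z)\<in>rel M j \<Longrightarrow> (x,z)\<in>rel M j"
  unfolding qt_def by blast
lemma rel1: "rel (S,R1,R2,V) (Suc 0) = R1" by (simp add: rel_def)
lemma rel2: "rel (S,R1,R2,V) 2 = R2" by (simp add: rel_def)

lemma sound:
  assumes "K4thm a" "qt (S,R1,R2,V)"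
  shows "sat (S,R1,R2,V) s a"
proof -
  have q1: "\<And>x y z. (x,y)\<in>R1 \<or> (x,y)\<in>R2 \<Longrightarrow> (y,z)\<in>R1 \<Longrightarrow> (x,z)\<in>R1"
    using qtD[OF assms(2), of 1 1] qtD[OF assms(2), of 2 1] by (auto simp add: rel1 rel2)
  have q2: "\<And>x y z. (x,y)\<in>R1 \<or> (x,y)\<in>R2 \<Longrightarrow> (y,z)\<in>R2 \<Longrightarrow> (x,z)\<in>R2"
    using qtD[OF assms(2), of 1 2] qtD[OF assms(2), of 2 2] by (auto simp add: rel1 rel2)
  show ?thesis using assms(1)
  proof (induction a arbitrary: s)
    case (Taut a)
    then show ?case by (subst sat_peval) (simp add: tautology_def)
  next
    case BTop then show ?case by simp
  next
    case (BNeg a) then show ?case by auto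
  next
    case (BAnd a b) then show ?case by auto
  next
    case (BSplit a b c)
    let ?M = "(S, R1, R2, V)"
    show ?case
    proof (simp only: sat_Imp sat_Or sat.simps, intro impI)
      assume h: "\<forall>t u. (s, t) \<in> R1 \<and> (s, u) \<in> R2 \<longrightarrow> (sat ?M t a \<longleftrightarrow> sat ?M u a)"
      show "(\<forall>t u. (s, t) \<in> R1 \<and> (s, u) \<in> R2 \<longrightarrow> ((sat ?M t a \<or> sat ?M t b) \<longleftrightarrow> (sat ?M u a \<or> sat ?M u b))) \<or>
            (\<forall>t u. (s, t) \<in> R1 \<and> (s, u) \<in> R2 \<longrightarrow> ((\<not> sat ?M t a \<or> sat ?M t c) \<longleftrightarrow> (\<not> sat ?M u a \<or> sat ?M u c)))"
      proof (cases "\<forall>t u. (s, t) \<in> R1 \<and> (s, u) \<in> R2 \<longrightarrow> sat ?M t a \<and> sat ?M u a")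
        case True then show ?thesis by blast
      next
        case False
        then obtain t0 u0 where tu0: "(s, t0) \<in> R1" "(s, u0) \<in> R2" "\<not> (sat ?M t0 a \<and> sat ?M u0 a)"
          by blast
        then have n: "\<not> sat ?M t0 a" "\<not> sat ?M u0 a" using h by blast+
        have "\<forall>t u. (s, t) \<in> R1 \<and> (s, u) \<in> R2 \<longrightarrow> \<not> sat ?M t a \<and> \<not> sat ?M u a"
        proof (intro allI impI)
          fix t u assume tu: "(s, t) \<in> R1 \<and> (s, u) \<in> R2"
          have "sat ?M t a \<longleftrightarrow> sat ?M u0 a" using h tu tu0 by blast
          moreover have "sat ?M u a \<longleftrightarrow> sat ?M t0 a" using h tu tu0 by blast
          ultimately show "\<not> sat ?M t a \<and> \<not> sat ?M u a" using n by blast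
        qed
        then show ?thesis by blast
      qed
    qed
  next
    case (B4 a b)
    let ?M = "(S, R1, R2, V)"
    show ?case unfolding sat_Imp
    proof
      assume h: "sat ?M s (Bdot a)"
      have ht: "\<And>t. (s,t)\<in>R1 \<or> (s,t)\<in>R2 \<Longrightarrow> sat ?M t (Bdot a)"
      proof -
        fix t assume st: "(s,t)\<in>R1 \<or> (s,t)\<in>R2"
        have "\<forall>t' u'. (t, t') \<in> R1 \<and> (t, u') \<in> R2 \<longrightarrow> (sat ?M t' a \<longleftrightarrow> sat ?M u' a)"
        proof (intro allI impI)
          fix t' u' assume "(t, t') \<in> R1 \<and> (t, u') \<in> R2"
          then have "(s, t') \<in> R1 \<and> (s, u') \<in> R2" using st q1 q2 by blast
          then show "sat ?M t' a = sat ?M u' a" using h by simp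
        qed
        then show "sat ?M t (Bdot a)" by simp
      qed
      show "sat ?M s (Bdot (Or (Bdot a) b))"
        unfolding sat.simps(4)[of S R1 R2 V s] sat_Or using ht by blast
    qed
  next
    case (MP a b) then show ?case by simp
  next
    case (RE a b) then show ?case by simp
  qed
qed

lemma pt_qt: "pt M \<Longrightarrow> qt M"
  unfolding pt_def qt_def by blast

lemma sound_conseq:
  assumes "K4_derives \<Gamma> \<phi>" "\<And>M. C M \<Longrightarrow> qt M"
  shows "conseq T C \<Gamma> \<phi>"
  unfolding conseq_def
proof (intro allI impI)
  fix M s
  assume h: "is_model M \<and> C M \<and> s \<in> fst M \<and> (\<forall>g\<in>\<Gamma>. sat M s g)"
  obtain L where L: "set L \<subseteq> \<Gamma>" "K4thm (Imp (conj_list L) \<phi>)"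
    using assms(1) unfolding K4_derives_def by blast
  obtain S R1 R2 V where M: "M = (S,R1,R2,V)" by (cases M) auto
  have "qt M" using h assms(2) by blast
  then have "sat M s (Imp (conj_list L) \<phi>)" unfolding M by (rule sound[OF L(2)])
  moreover have "sat M s (conj_list L)" using h L(1) by (auto simp: sat_conj)
  ultimately show "sat M s \<phi>" by simp
qed


section \<open>Consistency and maximal consistent sets\<close>

definition consistent :: "'p fm set \<Rightarrow> bool" where
  "consistent X \<longleftrightarrow> (\<forall>L. set L \<subseteq> X \<longrightarrow> \<not> K4thm (Neg (conj_list L)))"

definition mcs :: "'p fm set \<Rightarrow> bool" where
  "mcs X \<longleftrightarrow> consistent X \<and> (\<forall>a. a \<in> X \<or> Neg a \<in> X)"

lemma remove_elem:
  assumes "set L \<subseteq> insert a X" "K4thm (Neg (conj_list L))"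
  shows "\<exists>L'. set L' \<subseteq> X \<and> K4thm (Imp (conj_list L') (Neg a))"
proof (intro exI conjI)
  show "set (removeAll a L) \<subseteq> X" using assms(1) by auto
  show "K4thm (Imp (conj_list (removeAll a L)) (Neg a))"
    using assms(2) by (rule taut_mp) auto
qed

lemma mcs_derive:
  assumes "mcs X" "set L \<subseteq> X" "K4thm (Imp (conj_list L) a)"
  shows "a \<in> X"
proof (rule ccontr)
  assume "a \<notin> X"
  then have "Neg a \<in> X" using assms(1) unfolding mcs_def by blast
  then have "set (Neg a # L) \<subseteq> X" using assms(2) by auto
  moreover have "K4thm (Neg (conj_list (Neg a # L)))"
    using assms(3) by (rule taut_mp) auto
  ultimately show False using assms(1) unfolding mcs_def consistent_def by blast
qed

lemma mcs_thm: "mcs X \<Longrightarrow> K4thm a \<Longrightarrow> a \<in> X"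
  by (rule mcs_derive[where L="[]"]) (auto elim: taut_mp)

lemma mcs_imp: "mcs X \<Longrightarrow> a \<in> X \<Longrightarrow> K4thm (Imp a b) \<Longrightarrow> b \<in> X"
  by (rule mcs_derive[where L="[a]"]) (auto elim: taut_mp)

lemma mcs_imp2: "mcs X \<Longrightarrow> a \<in> X \<Longrightarrow> b \<in> X \<Longrightarrow> K4thm (Imp a (Imp b c)) \<Longrightarrow> c \<in> X"
  by (rule mcs_derive[where L="[a,b]"]) (auto elim: taut_mp)

lemma mcs_Neg: "mcs X \<Longrightarrow> Neg a \<in> X \<longleftrightarrow> a \<notin> X"
proof
  assume m: "mcs X" and n: "Neg a \<in> X"
  show "a \<notin> X"
  proof
    assume "a \<in> X"
    then have "set [a, Neg a] \<subseteq> X" using n by auto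
    moreover have "K4thm (Neg (conj_list [a, Neg a]))" by (rule taut_thm) simp
    ultimately show False using m unfolding mcs_def consistent_def by blast
  qed
next
  assume "mcs X" "a \<notin> X" then show "Neg a \<in> X" unfolding mcs_def by blast
qed

lemma mcs_And: "mcs X \<Longrightarrow> And a b \<in> X \<longleftrightarrow> a \<in> X \<and> b \<in> X"
proof
  assume m: "mcs X"
  { assume "And a b \<in> X"
    then show "a \<in> X \<and> b \<in> X" using mcs_imp[OF m] taut_thm by (metis peval.simps(3) peval_Imp) }
  { assume "a \<in> X \<and> b \<in> X"
    moreover have "K4thm (Imp a (Imp b (And a b)))" by (rule taut_thm) simp
    ultimately show "And a b \<in> X" using mcs_imp2[OF m, of a b "And a b"] by blast }
qed

section \<open>Lindenbaum\<close>

lemma lindenbaum: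
  assumes "consistent X"
  shows "\<exists>Y. X \<subseteq> Y \<and> mcs Y"
proof -
  let ?A = "{Y. X \<subseteq> Y \<and> consistent Y}"
  have "\<forall>C\<in>chains ?A. \<exists>U\<in>?A. \<forall>Z\<in>C. Z \<subseteq> U"
  proof
    fix C assume C: "C \<in> chains ?A"
    show "\<exists>U\<in>?A. \<forall>Z\<in>C. Z \<subseteq> U"
    proof (cases "C = {}")
      case True then show ?thesis using assms by auto
    next
      case False
      have "\<Union>C \<in> ?A"
      proof
        have "X \<subseteq> \<Union>C" using False C unfolding chains_def by auto
        moreover have "consistent (\<Union>C)"
          unfolding consistent_def
        proof (intro allI impI)
          fix L assume L: "set L \<subseteq> \<Union>C"
          have ch: "subset.chain ?A C" using C by (simp add: chains_alt_def)
          obtain B where B: "B \<in> C" "set L \<subseteq> B"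
            using finite_subset_Union_chain[OF _ L False ch] by auto
          then have "consistent B" using C unfolding chains_def by auto
          then show "\<not> K4thm (Neg (conj_list L))" using B unfolding consistent_def by auto
        qed
        ultimately show "X \<subseteq> \<Union>C \<and> consistent (\<Union>C)" by simp
      qed
      then show ?thesis by blast
    qed
  qed
  from Zorn_Lemma2[OF this] obtain M where M: "M \<in> ?A" "\<forall>Z\<in>?A. M \<subseteq> Z \<longrightarrow> Z = M"
    by blast
  have "mcs M" unfolding mcs_def
  proof (intro conjI allI)
    show "consistent M" using M by simp
    fix a
    show "a \<in> M \<or> Neg a \<in> M"
    proof (rule ccontr)
      assume h: "\<not> (a \<in> M \<or> Neg a \<in> M)"
      have "\<not> consistent (insert a M)" using M h by (metis (no_types, lifting) insertI1 mem_Collect_eq subset_insertI subset_trans)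
      then obtain L1 where L1: "set L1 \<subseteq> insert a M" "K4thm (Neg (conj_list L1))"
        unfolding consistent_def by blast
      have "\<not> consistent (insert (Neg a) M)" using M h by (metis (no_types, lifting) insertI1 mem_Collect_eq subset_insertI subset_trans)
      then obtain L2 where L2: "set L2 \<subseteq> insert (Neg a) M" "K4thm (Neg (conj_list L2))"
        unfolding consistent_def by blast
      obtain L1' where L1': "set L1' \<subseteq> M" "K4thm (Imp (conj_list L1') (Neg a))"
        using remove_elem[OF L1] by blast
      obtain L2' where L2': "set L2' \<subseteq> M" "K4thm (Imp (conj_list L2') (Neg (Neg a)))"
        using remove_elem[OF L2] by blast
      have "set (L1' @ L2') \<subseteq> M" using L1' L2' by auto
      moreover have "K4thm (Neg (conj_list (L1' @ L2')))"
        using L1'(2) L2'(2) by (rule taut_mp2) auto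
      ultimately show False using M unfolding consistent_def by auto
    qed
  qed
  then show ?thesis using M by blast
qed


lemma D_RE: "mcs X \<Longrightarrow> K4thm (Iff a b) \<Longrightarrow> Bdot a \<in> X \<longleftrightarrow> Bdot b \<in> X"
proof -
  assume m: "mcs X" and h: "K4thm (Iff a b)"
  have r: "K4thm (Iff (Bdot a) (Bdot b))" using RE[OF h] .
  have 1: "K4thm (Imp (Bdot a) (Bdot b))" using r by (rule taut_mp) simp
  have 2: "K4thm (Imp (Bdot b) (Bdot a))" using r by (rule taut_mp) simp
  show ?thesis using mcs_imp[OF m _ 1] mcs_imp[OF m _ 2] by blast
qed

lemma D_eq: "mcs X \<Longrightarrow> (\<And>g. peval g a = peval g b) \<Longrightarrow> Bdot a \<in> X \<longleftrightarrow> Bdot b \<in> X"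
  by (rule D_RE) (auto intro: taut_thm)

lemma D_Neg: "mcs X \<Longrightarrow> Bdot (Neg a) \<in> X \<longleftrightarrow> Bdot a \<in> X"
proof -
  assume m: "mcs X"
  have r: "K4thm (Iff (Bdot a) (Bdot (Neg a)))" by (rule BNeg)
  have 1: "K4thm (Imp (Bdot a) (Bdot (Neg a)))" using r by (rule taut_mp) simp
  have 2: "K4thm (Imp (Bdot (Neg a)) (Bdot a))" using r by (rule taut_mp) simp
  show ?thesis using mcs_imp[OF m _ 1] mcs_imp[OF m _ 2] by blast
qed

lemma D_And: "mcs X \<Longrightarrow> Bdot a \<in> X \<Longrightarrow> Bdot b \<in> X \<Longrightarrow> Bdot (And a b) \<in> X"
proof -
  assume m: "mcs X" "Bdot a \<in> X" "Bdot b \<in> X"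
  have "K4thm (Imp (Bdot a) (Imp (Bdot b) (Bdot (And a b))))"
    using BAnd[of a b] by (rule taut_mp) simp
  then show ?thesis using mcs_imp2[OF m] by blast
qed

lemma D_Split: "mcs X \<Longrightarrow> Bdot a \<in> X \<Longrightarrow> Bdot (Or a b) \<in> X \<or> Bdot (Or (Neg a) c) \<in> X"
proof -
  assume m: "mcs X" "Bdot a \<in> X"
  have "K4thm (Imp (Bdot a) (Imp (Neg (Bdot (Or a b))) (Bdot (Or (Neg a) c))))"
    using BSplit[of a b c] by (rule taut_mp) auto
  then show ?thesis using mcs_imp2[OF m] mcs_Neg[OF m(1)] by blast
qed

lemma D_4: "mcs X \<Longrightarrow> Bdot a \<in> X \<Longrightarrow> Bdot (Or (Bdot a) b) \<in> X"
  using mcs_imp B4 by blast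

lemma D_Top: "mcs X \<Longrightarrow> Bdot Top \<in> X"
  using mcs_thm BTop by blast

definition box :: "'p fm set \<Rightarrow> 'p fm set" where
  "box X = {a. \<forall>b. Bdot (Or a b) \<in> X}"

definition Rc :: "'p fm set \<Rightarrow> 'p fm set \<Rightarrow> bool" where
  "Rc X Y \<longleftrightarrow> (\<exists>c. Bdot c \<notin> X) \<and> box X \<subseteq> Y"

lemma box_Top: "mcs X \<Longrightarrow> Top \<in> box X"
  unfolding box_def using D_Top D_eq[of X "Or Top _" Top] by auto

lemma box_And: "mcs X \<Longrightarrow> a \<in> box X \<Longrightarrow> b \<in> box X \<Longrightarrow> And a b \<in> box X"
  unfolding box_def
proof (intro CollectI allI)
  fix c assume m: "mcs X" and a: "a \<in> {a. \<forall>b. Bdot (Or a b) \<in> X}" and b: "b \<in> {a. \<forall>b. Bdot (Or a b) \<in> X}"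
  have "Bdot (And (Or a c) (Or b c)) \<in> X" using D_And[OF m] a b by auto
  then show "Bdot (Or (And a b) c) \<in> X" using D_eq[OF m, of "And (Or a c) (Or b c)" "Or (And a b) c"] by auto
qed

lemma box_conj: "mcs X \<Longrightarrow> set L \<subseteq> box X \<Longrightarrow> conj_list L \<in> box X"
  by (induction L) (auto simp: conj_list_def box_Top box_And)

lemma box_mono: "mcs X \<Longrightarrow> a \<in> box X \<Longrightarrow> K4thm (Imp a b) \<Longrightarrow> b \<in> box X"
  unfolding box_def
proof (intro CollectI allI)
  fix c assume m: "mcs X" and a: "a \<in> {a. \<forall>b. Bdot (Or a b) \<in> X}" and i: "K4thm (Imp a b)"
  have "K4thm (Iff (Or a (Or b c)) (Or b c))" using i by (rule taut_mp) auto
  then show "Bdot (Or b c) \<in> X" using D_RE[OF m] a by blast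
qed

lemma box_D: "mcs X \<Longrightarrow> a \<in> box X \<Longrightarrow> Bdot a \<in> X"
  unfolding box_def using D_eq[of X "Or a (Neg Top)" a] by auto

lemma box_4: "mcs X \<Longrightarrow> a \<in> box X \<Longrightarrow> Bdot (Or a b) \<in> box X"
  unfolding box_def using D_4 by blast

lemma D_dich: "mcs X \<Longrightarrow> Bdot a \<in> X \<Longrightarrow> a \<in> box X \<or> Neg a \<in> box X"
  unfolding box_def using D_Split by blast

lemma Rc_trans: "mcs X \<Longrightarrow> Rc X Y \<Longrightarrow> Rc Y Z \<Longrightarrow> Rc X Z"
proof -
  assume m: "mcs X" and xy: "Rc X Y" and yz: "Rc Y Z"
  have "box X \<subseteq> box Y"
  proof
    fix a assume "a \<in> box X"
    then have "\<forall>b. Bdot (Or a b) \<in> Y" using box_4[OF m] xy unfolding Rc_def by blast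
    then show "a \<in> box Y" unfolding box_def by blast
  qed
  then show ?thesis using xy yz unfolding Rc_def by blast
qed

lemma box_ext_cons:
  assumes m: "mcs X" and h: "Bdot a \<notin> X"
  shows "consistent (insert a (box X))" "consistent (insert (Neg a) (box X))"
proof -
  show "consistent (insert a (box X))" unfolding consistent_def
  proof (intro allI impI notI)
    fix L assume "set L \<subseteq> insert a (box X)" "K4thm (Neg (conj_list L))"
    from remove_elem[OF this] obtain L' where L': "set L' \<subseteq> box X" "K4thm (Imp (conj_list L') (Neg a))"
      by blast
    have "Neg a \<in> box X" using box_mono[OF m box_conj[OF m L'(1)] L'(2)] .
    then show False using box_D[OF m] D_Neg[OF m] h by blast
  qed
  show "consistent (insert (Neg a) (box X))" unfolding consistent_def
  proof (intro allI impI notI)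
    fix L assume "set L \<subseteq> insert (Neg a) (box X)" "K4thm (Neg (conj_list L))"
    from remove_elem[OF this] obtain L' where L': "set L' \<subseteq> box X" "K4thm (Imp (conj_list L') (Neg (Neg a)))"
      by blast
    have "K4thm (Imp (conj_list L') a)" using L'(2) by (rule taut_mp) auto
    then have "a \<in> box X" using box_mono[OF m box_conj[OF m L'(1)]] by blast
    then show False using box_D[OF m] h by blast
  qed
qed

lemma D_truth:
  assumes m: "mcs X"
  shows "Bdot a \<in> X \<longleftrightarrow> (\<forall>Y Z. mcs Y \<and> Rc X Y \<and> mcs Z \<and> Rc X Z \<longrightarrow> (a \<in> Y \<longleftrightarrow> a \<in> Z))"
proof
  assume "Bdot a \<in> X"
  then have "a \<in> box X \<or> Neg a \<in> box X" using D_dich[OF m] by blast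
  then show "\<forall>Y Z. mcs Y \<and> Rc X Y \<and> mcs Z \<and> Rc X Z \<longrightarrow> (a \<in> Y \<longleftrightarrow> a \<in> Z)"
    unfolding Rc_def using mcs_Neg by blast
next
  assume all: "\<forall>Y Z. mcs Y \<and> Rc X Y \<and> mcs Z \<and> Rc X Z \<longrightarrow> (a \<in> Y \<longleftrightarrow> a \<in> Z)"
  show "Bdot a \<in> X"
  proof (rule ccontr)
    assume h: "Bdot a \<notin> X"
    obtain Y where Y: "insert a (box X) \<subseteq> Y" "mcs Y" using lindenbaum box_ext_cons(1)[OF m h] by blast
    obtain Z where Z: "insert (Neg a) (box X) \<subseteq> Z" "mcs Z" using lindenbaum box_ext_cons(2)[OF m h] by blast
    have "Rc X Y" "Rc X Z" using Y Z h unfolding Rc_def by auto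
    then have "a \<in> Z" using all Y Z by blast
    then show False using Z mcs_Neg by blast
  qed
qed

section \<open>Canonical model\<close>

definition CS :: "'p fm set set set" where "CS = {{X} | X. mcs X}"
definition CR :: "('p fm set set \<times> 'p fm set set) set" where
  "CR = {({X},{Y}) | X Y. mcs X \<and> mcs Y \<and> Rc X Y}"
definition CV :: "'p \<Rightarrow> 'p fm set set set" where
  "CV p = {{X} | X. mcs X \<and> Atom p \<in> X}"

lemma CR_iff: "({X},t) \<in> CR \<longleftrightarrow> (\<exists>Y. t = {Y} \<and> mcs X \<and> mcs Y \<and> Rc X Y)"
  unfolding CR_def by auto

lemma truth: "mcs X \<Longrightarrow> sat (CS, CR, CR, CV) {X} a \<longleftrightarrow> a \<in> X"
proof (induction a arbitrary: X)
  case (Atom p) then show ?case by (auto simp: CV_def)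
next
  case (Neg a) then show ?case using mcs_Neg by auto
next
  case (And a b) then show ?case using mcs_And[OF And.prems] by auto
next
  case (Bdot a)
  have "sat (CS, CR, CR, CV) {X} (Bdot a) \<longleftrightarrow>
     (\<forall>Y Z. mcs Y \<and> Rc X Y \<and> mcs Z \<and> Rc X Z \<longrightarrow> (a \<in> Y \<longleftrightarrow> a \<in> Z))"
    using Bdot by (auto simp: CR_iff)
  then show ?case using D_truth[OF Bdot.prems] by simp
qed

lemma canon_model:
  fixes X :: "'p fm set"
  shows "mcs X \<Longrightarrow> is_model (CS :: 'p fm set set set, CR, CR, CV :: 'p \<Rightarrow> 'p fm set set set)"
proof -
  assume m: "mcs X"
  have "{X} \<in> CS" using m unfolding CS_def by blast
  moreover have "CR \<subseteq> CS \<times> (CS :: 'p fm set set set)" unfolding CR_def CS_def by auto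
  moreover have "\<forall>p. CV p \<subseteq> (CS :: 'p fm set set set)" unfolding CV_def CS_def by auto
  ultimately show ?thesis unfolding is_model_def prod.case by blast
qed

lemma CR_trans: "(x,y) \<in> CR \<Longrightarrow> (y,z) \<in> CR \<Longrightarrow> (x,z) \<in> CR"
proof -
  assume xy: "(x,y) \<in> CR" and yz: "(y,z) \<in> CR"
  obtain X Y where 1: "x = {X}" "y = {Y}" "mcs X" "mcs Y" "Rc X Y" using xy unfolding CR_def by blast
  obtain Y' Z where 2: "y = {Y'}" "z = {Z}" "mcs Y'" "mcs Z" "Rc Y' Z" using yz unfolding CR_def by blast
  have "Y' = Y" using 1 2 by simp
  then have "Rc X Z" using Rc_trans 1 2 by blast
  then show ?thesis using 1 2 unfolding CR_def by blast
qed

lemma canon_pt: "pt (CS :: 'p fm set set set, CR, CR, CV :: 'p \<Rightarrow> 'p fm set set set)"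
  unfolding pt_def rel_def using CR_trans by (simp; blast)

lemma completeness:
  fixes \<Gamma> :: "'p fm set" and \<phi> :: "'p fm"
  assumes "pt_conseq TYPE('p fm set set) \<Gamma> \<phi>"
  shows "K4_derives \<Gamma> \<phi>"
proof (rule ccontr)
  assume nd: "\<not> K4_derives \<Gamma> \<phi>"
  have "consistent (insert (Neg \<phi>) \<Gamma>)" unfolding consistent_def
  proof (intro allI impI notI)
    fix L assume "set L \<subseteq> insert (Neg \<phi>) \<Gamma>" "K4thm (Neg (conj_list L))"
    from remove_elem[OF this] obtain L' where L': "set L' \<subseteq> \<Gamma>" "K4thm (Imp (conj_list L') (Neg (Neg \<phi>)))"
      by blast
    have "K4thm (Imp (conj_list L') \<phi>)" using L'(2) by (rule taut_mp) auto
    then show False using nd L'(1) unfolding K4_derives_def by blast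
  qed
  then obtain X where X: "insert (Neg \<phi>) \<Gamma> \<subseteq> X" "mcs X" using lindenbaum by blast
  have "sat (CS, CR, CR, CV) {X} \<phi>"
  proof -
    have h1: "is_model (CS, CR, CR, CV :: 'p \<Rightarrow> 'p fm set set set) \<and> pt (CS, CR, CR, CV :: 'p \<Rightarrow> 'p fm set set set) \<and> {X} \<in> fst (CS, CR, CR, CV :: 'p \<Rightarrow> 'p fm set set set) \<and>
      (\<forall>g\<in>\<Gamma>. sat (CS, CR, CR, CV) {X} g)"
      using canon_model[OF X(2)] canon_pt X truth[OF X(2)] by (auto simp: CS_def)
    have h2: "\<forall>(M::('p fm set set,'p) model) s. is_model M \<and> pt M \<and> s \<in> fst M \<and> (\<forall>g\<in>\<Gamma>. sat M s g) \<longrightarrow> sat M s \<phi>"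
      using assms unfolding conseq_def by simp
    show ?thesis by (rule mp[OF spec[OF spec[OF h2]] h1])
  qed
  then have "\<phi> \<in> X" using truth[OF X(2)] by simp
  then show False using X mcs_Neg by blast
qed

theorem mainTheorem19:
  fixes \<Gamma> :: "'p fm set" and \<phi> :: "'p fm"
  shows "(K4_derives \<Gamma> \<phi> \<longrightarrow> qt_conseq TYPE('s) \<Gamma> \<phi> \<and> pt_conseq TYPE('s) \<Gamma> \<phi>)
       \<and> (qt_conseq TYPE('p fm set set) \<Gamma> \<phi> \<longrightarrow> K4_derives \<Gamma> \<phi>)
       \<and> (pt_conseq TYPE('p fm set set) \<Gamma> \<phi> \<longrightarrow> K4_derives \<Gamma> \<phi>)"
proof (intro conjI impI)
  assume "K4_derives \<Gamma> \<phi>"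
  then show "qt_conseq TYPE('s) \<Gamma> \<phi>" "pt_conseq TYPE('s) \<Gamma> \<phi>"
    using sound_conseq pt_qt by blast+
next
  assume "qt_conseq TYPE('p fm set set) \<Gamma> \<phi>"
  then have "pt_conseq TYPE('p fm set set) \<Gamma> \<phi>" unfolding conseq_def using pt_qt by blast
  then show "K4_derives \<Gamma> \<phi>" by (rule completeness)
next
  assume "pt_conseq TYPE('p fm set set) \<Gamma> \<phi>"
  then show "K4_derives \<Gamma> \<phi>" by (rule completeness)
qed

end
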